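(* Let $q = 2^\ell$ with $\ell\ge 1$, and let $\alpha,\beta \in \mathbb{F}_{q^2}$ be such that the line $\{(\alpha t+\beta, t)\}$ is not tangent to the Hermitian curve $x^q+x=y^{q+1}$. Let $p_{\alpha,\beta}(t) = t^{q+1} + \alpha^q t^q + \alpha t + (\beta+\beta^q)$. Let $0 \leq k < q^2$ and write $k = wq + z$ with $0 \le z < q$. Suppose that either $w = 0$, or there exists $1 \leq i \leq \ell$ such that $w \equiv 0 \pmod{2^i}$ and $z \not\equiv -1 \pmod{2^i}$. Then the remainder of $t^k$ upon division by $p_{\alpha,\beta}(t)$ in $\mathbb{F}_{q^2}[t]$ has degree strictly less than $q$. *)

theory Defs
  imports "HOL-Computational_Algebra.Polynomial" "HOL-Number_Theory.Cong" "HOL-Library.Cardinality"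
begin

definition hermitian :: "nat \<Rightarrow> 'a::field \<Rightarrow> 'a \<Rightarrow> bool" where
  "hermitian q x y \<longleftrightarrow> x ^ q + x = y ^ (q + 1)"

text \<open>The line  {(alpha t + beta, t)}  is tangent to the curve F(x,y) = x^q + x - y^(q+1) = 0
  at some point of the curve lying on it: the point P = (alpha t0 + beta, t0) is on the curve
  and the direction vector (alpha, 1) of the line is orthogonal to the gradient
  (F_x(P), F_y(P)) = (q x0^(q-1) + 1, -(q+1) t0^q), i.e. the line is the tangent line at P.\<close>
definition line_tangent_hermitian :: "nat \<Rightarrow> 'a::field \<Rightarrow> 'a \<Rightarrow> bool" where
  "line_tangent_hermitian q \<alpha> \<beta> \<longleftrightarrow>
     (\<exists>t0. hermitian q (\<alpha> * t0 + \<beta>) t0 \<and>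
        \<alpha> * (of_nat q * (\<alpha> * t0 + \<beta>) ^ (q - 1) + 1) + 1 * (- (of_nat (q + 1) * t0 ^ q)) = 0)"

definition p_ab :: "nat \<Rightarrow> 'a::field \<Rightarrow> 'a \<Rightarrow> 'a poly" where
  "p_ab q \<alpha> \<beta> = monom 1 (q + 1) + monom (\<alpha> ^ q) q + monom \<alpha> 1 + [:\<beta> + \<beta> ^ q:]"

end

theory Submission imports Defs begin

lemma diff_dvd_pow_diff:
  fixes x y :: "'b::comm_ring_1"
  shows "(x - y) dvd (x ^ n - y ^ n)"
proof (induction n)
  case 0 then show ?case by simp
next
  case (Suc n)
  have "x ^ Suc n - y ^ Suc n = x * (x ^ n - y ^ n) + (x - y) * y ^ n"
    by (simp add: algebra_simps)
  then show ?case using Suc by (simp add: dvd_add)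
qed

lemma frob:
  fixes x y :: "'b::comm_ring_1"
  assumes c: "(1::'b) + 1 = 0"
  shows "(x + y) ^ (2 ^ e) = x ^ (2 ^ e) + y ^ (2 ^ e)"
proof (induction e)
  case 0 then show ?case by simp
next
  case (Suc e)
  have sq: "(u + v) ^ 2 = u ^ 2 + v ^ 2" for u v :: 'b
  proof -
    have "(u + v) ^ 2 = u ^ 2 + v ^ 2 + (1 + 1) * u * v" by (simp add: power2_eq_square algebra_simps)
    then show ?thesis using c by simp
  qed
  have "(x + y) ^ (2 ^ Suc e) = ((x + y) ^ (2 ^ e)) ^ 2"
    by (simp add: power_mult[symmetric] mult.commute)
  also have "... = (x ^ (2 ^ e)) ^ 2 + (y ^ (2 ^ e)) ^ 2" using Suc sq by simp
  also have "... = x ^ (2 ^ Suc e) + y ^ (2 ^ Suc e)"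
    by (simp add: power_mult[symmetric] mult.commute)
  finally show ?case .
qed

lemma fermat_fin:
  fixes x :: "'a::{field,finite}"
  shows "x ^ CARD('a) = x"
proof (cases "x = 0")
  case True then show ?thesis by (simp add: zero_power)
next
  case False
  let ?S = "UNIV - {0::'a}"
  have inj: "inj_on ((*) x) ?S" using False by (auto simp: inj_on_def)
  have img: "(*) x ` ?S = ?S"
  proof
    show "(*) x ` ?S \<subseteq> ?S" using False by auto
    show "?S \<subseteq> (*) x ` ?S"
    proof
      fix y assume "y \<in> ?S"
      then have "y = x * (y / x)" "y / x \<in> ?S" using False by auto
      then show "y \<in> (*) x ` ?S" by blast
    qed
  qed
  have "prod (\<lambda>y. y) ?S = prod (\<lambda>y. y) ((*) x ` ?S)" using img by simp
  also have "... = prod (\<lambda>y. x * y) ?S" using prod.reindex[OF inj] by simp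
  also have "... = x ^ card ?S * prod (\<lambda>y. y) ?S" by (simp add: prod.distrib)
  finally have "x ^ card ?S = 1"
    by (metis (no_types, lifting) DiffE finite mult_cancel_right2 prod_zero_iff singletonI)
  moreover have "card ?S = CARD('a) - 1" by (simp add: card_Diff_singleton)
  moreover have "CARD('a) > 0" by simp
  ultimately show ?thesis by (metis Suc_diff_1 mult.commute power_Suc2 mult_1)
qed

lemma coeff_pcomp_monom_mult:
  fixes p g :: "'b::comm_ring_1 poly"
  assumes "degree g < B" "m0 < B"
  shows "coeff (pcompose p (monom 1 B) * g) (m1 * B + m0) = coeff p m1 * coeff g m0"
  using assms
proof (induction p arbitrary: m1 rule: pCons_induct)
  case 0 then show ?case by simp
next
  case (pCons c p)
  have e: "pcompose (pCons c p) (monom 1 B) * g = smult c g + monom 1 B * (pcompose p (monom 1 B) * g)"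
    by (simp add: pcompose_pCons algebra_simps)
  show ?case
  proof (cases m1)
    case 0 then show ?thesis using pCons.prems by (simp add: e coeff_monom_mult)
  next
    case (Suc m)
    have "coeff g (m1 * B + m0) = 0" using pCons.prems Suc by (intro coeff_eq_0) auto
    moreover have "m1 * B + m0 - B = m * B + m0" using Suc by simp
    ultimately show ?thesis using pCons.IH[of m] pCons.prems Suc by (simp add: e coeff_monom_mult)
  qed
qed

lemma coeff_lin_pow:
  "coeff ([:1, 1:] ^ n) i = (of_nat (n choose i) :: 'b::comm_ring_1)"
proof (cases "i \<le> n")
  case True then show ?thesis by (simp add: coeff_linear_poly_power)
next
  case False
  then have "coeff ([:1::'b, 1:] ^ n) i = 0"
    by (intro coeff_eq_0) (simp add: degree_linear_power)
  then show ?thesis using False by (simp add: binomial_eq_0)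
qed

lemma lucas2:
  fixes z1 z0 m1 m0 :: nat
  assumes c: "(1::'b::comm_ring_1) + 1 = 0" and B: "B = 2 ^ e" and "z0 < B" "m0 < B"
  shows "(of_nat ((z1 * B + z0) choose (m1 * B + m0)) :: 'b) = of_nat (z1 choose m1) * of_nat (z0 choose m0)"
proof -
  have cp: "(1::'b poly) + 1 = 0" 
  proof -
    have "(1::'b poly) + 1 = pCons (1+1) (0+0)" unfolding one_pCons by (rule add_pCons)
    then show ?thesis using c by simp
  qed
  have X: "[:1::'b, 1:] = 1 + monom 1 1" by (simp add: monom_Suc one_pCons)
  have "[:1::'b, 1:] ^ B = 1 + monom 1 B"
    using frob[OF cp, of 1 "monom 1 1" e] B by (simp add: X monom_power)
  also have "... = pcompose [:1, 1:] (monom 1 B)" by (simp add: pcompose_pCons)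
  finally have PB: "[:1::'b, 1:] ^ B = pcompose [:1, 1:] (monom 1 B)" .
  have pcp: "pcompose (r ^ n) s = pcompose r s ^ n" for r s :: "'b poly" and n
    by (induction n) (simp_all add: pcompose_mult pcompose_1)
  have "[:1::'b, 1:] ^ (z1 * B + z0) = pcompose ([:1, 1:] ^ z1) (monom 1 B) * [:1, 1:] ^ z0"
    by (simp add: power_add pcp PB[symmetric] power_mult[symmetric] mult.commute)
  moreover have "degree ([:1::'b, 1:] ^ z0) < B"
    using assms(3) by (simp add: degree_linear_power)
  ultimately show ?thesis
    using coeff_pcomp_monom_mult[of "[:1::'b, 1:] ^ z0" B m0 "[:1, 1:] ^ z1" m1] assms(4)
    by (metis coeff_lin_pow)
qed

lemma comb_zero:
  assumes c: "(1::'b::comm_ring_1) + 1 = 0" and q: "q = 2 ^ l" and "l \<ge> 1"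
    and k: "k < q ^ 2" and w: "w = k div q" and z: "z = k mod q"
    and cond: "w = 0 \<or> (\<exists>i. 1 \<le> i \<and> i \<le> l \<and> [w = 0] (mod 2 ^ i) \<and>
                       \<not> [int z = - 1] (mod 2 ^ i))"
    and j: "j \<le> k" "j mod (q + 1) = q"
  shows "(of_nat (k choose j) :: 'b) = 0"
proof -
  have qpos: "q > 0" using q by simp
  define n where "n = j div (q + 1) + 1"
  have n1: "n \<ge> 1" by (simp add: n_def)
  have jn: "j = n * q + (n - 1)"
  proof -
    have "j = (q + 1) * (j div (q + 1)) + q" using j(2) by (metis div_mult_mod_eq mult.commute)
    then show ?thesis by (simp add: n_def algebra_simps)
  qed
  have "n * q < q * q" using jn j(1) k unfolding power2_eq_square by linarith
  then have nq: "n < q" by simp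
  have kwz: "k = w * q + z" using w z by simp
  have zq: "z < q" using z qpos by simp
  have L: "(of_nat (k choose j) :: 'b) = of_nat (w choose n) * of_nat (z choose (n - 1))"
    using lucas2[OF c q zq, of "n - 1" w n] nq kwz jn by simp
  show ?thesis
  proof (cases "w = 0")
    case True then show ?thesis using L n1 by (simp add: binomial_eq_0)
  next
    case False
    then obtain i where i: "1 \<le> i" "[w = 0] (mod 2 ^ i)" "\<not> [int z = - 1] (mod 2 ^ i)"
      using cond by blast
    define B where "B = (2::nat) ^ i"
    have Bpos: "B > 0" by (simp add: B_def)
    obtain w' where w': "w = w' * B" using i(2) unfolding B_def by (metis cong_0_iff dvd_def mult.commute)
    define n0 where "n0 = n mod B"
    define n1' where "n1' = n div B"
    have nB: "n = n1' * B + n0" by (simp add: n0_def n1'_def)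
    have n0B: "n0 < B" using Bpos by (simp add: n0_def)
    have Lw: "(of_nat (w choose n) :: 'b) = of_nat (w' choose n1') * of_nat (0 choose n0)"
      using lucas2[OF c B_def Bpos n0B, of w' n1'] w' nB by simp
    show ?thesis
    proof (cases "n0 = 0")
      case False then show ?thesis using L Lw by (simp add: binomial_eq_0)
    next
      case True
      have n1p: "n1' \<ge> 1" using n1 nB True by (cases n1') auto
      have nm: "n - 1 = (n1' - 1) * B + (B - 1)" using nB True n1p Bpos
        by (cases n1') (auto simp: algebra_simps)
      define z0 where "z0 = z mod B"
      define z1 where "z1 = z div B"
      have zB: "z = z1 * B + z0" by (simp add: z0_def z1_def)
      have z0B: "z0 < B" using Bpos by (simp add: z0_def)
      have "z0 \<noteq> B - 1"
      proof
        assume h: "z0 = B - 1"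
        have "int z mod 2 ^ i = int (z mod B)" by (simp add: B_def zmod_int)
        also have "... = 2 ^ i - 1" using h Bpos by (simp add: z0_def B_def of_nat_diff)
        also have "... = (-1) mod 2 ^ i" by (simp add: zmod_minus1)
        finally show False using i(3) by (simp add: cong_def)
      qed
      then have z0lt: "z0 < B - 1" using z0B by simp
      have Lz: "(of_nat (z choose (n - 1)) :: 'b) = of_nat (z1 choose (n1' - 1)) * of_nat (z0 choose (B - 1))"
        using lucas2[OF c B_def z0B, of "B - 1" z1 "n1' - 1"] Bpos nm zB by simp
      then show ?thesis using L z0lt by (simp add: binomial_eq_0)
    qed
  qed
qed

theorem mainTheorem7:
  fixes \<alpha> \<beta> :: "'a::{field,finite}"
    and l q k w z :: nat
  assumes "l \<ge> 1"
    and "q = 2 ^ l"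
    and "CARD('a) = q ^ 2"
    and "\<not> line_tangent_hermitian q \<alpha> \<beta>"
    and "k < q ^ 2"
    and "w = k div q" and "z = k mod q"
    and "w = 0 \<or> (\<exists>i. 1 \<le> i \<and> i \<le> l \<and> [w = 0] (mod 2 ^ i) \<and>
                       \<not> [int z = - 1] (mod 2 ^ i))"
  shows "degree (monom 1 k mod p_ab q \<alpha> \<beta>) < q"
proof -
  have qpos: "q \<ge> 2" using assms(1,2) by (metis one_le_power power_one_right power_increasing nat_1_add_1 add_le_same_cancel1 one_le_numeral not_one_le_zero le_add2)
  have ferm: "x ^ (q ^ 2) = x" for x :: 'a using fermat_fin[of x] assms(3) by simp
  have c: "(1::'a) + 1 = 0"
  proof -
    have ev: "even (q ^ 2)" using assms(1,2) by simp
    have "(-1::'a) ^ (q ^ 2) = -1" by (rule ferm)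
    moreover have "(-1::'a) ^ (q ^ 2) = 1" using ev by simp
    ultimately have "(1::'a) = -1" by simp
    then show ?thesis by (metis add.right_inverse)
  qed
  have cp: "(1::'a poly) + 1 = 0"
  proof -
    have "(1::'a poly) + 1 = pCons (1+1) (0+0)" unfolding one_pCons by (rule add_pCons)
    then show ?thesis using c by simp
  qed
  define a where "a = \<alpha> ^ q"
  have aq: "a ^ q = \<alpha>" using ferm[of \<alpha>] by (simp add: a_def power_mult[symmetric] power2_eq_square)
  define s where "s = [:a, 1:]"
  have s_m: "s = monom 1 1 + monom a 0"
    by (simp add: s_def poly_eq_iff coeff_pCons coeff_monom split: nat.split)
  have sq: "s ^ q = monom 1 q + monom \<alpha> 0"
    using frob[OF cp, of "monom 1 1" "monom a 0" l] aq unfolding assms(2) by (simp add: s_m monom_power)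
  have sq1: "s ^ (q + 1) = monom 1 (q + 1) + monom a q + monom \<alpha> 1 + monom (\<alpha> * a) 0"
  proof -
    have "s ^ (q + 1) = s ^ q * s" by simp
    also have "... = (monom 1 q + monom \<alpha> 0) * (monom 1 1 + monom a 0)" unfolding sq by (simp only: s_m)
    also have "... = monom 1 (q + 1) + monom a q + monom \<alpha> 1 + monom (\<alpha> * a) 0"
      by (simp add: algebra_simps mult_monom)
    finally show ?thesis .
  qed
  define g where "g = \<alpha> * a - (\<beta> + \<beta> ^ q)"
  define P where "P = p_ab q \<alpha> \<beta>"
  have PS: "P = s ^ (q + 1) - [:g:]"
    unfolding sq1 using qpos by (auto simp add: P_def p_ab_def g_def a_def poly_eq_iff coeff_monom coeff_pCons split: nat.split)
  define T where "T j = smult (of_nat (k choose j) * (-a) ^ (k - j) * g ^ (j div (q + 1))) (s ^ (j mod (q + 1)))" for j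
  define Q where "Q = (\<Sum>j\<le>k. T j)"
  have tk: "monom 1 k = (\<Sum>j\<le>k. smult (of_nat (k choose j) * (-a) ^ (k - j)) (s ^ j))"
  proof -
    have "monom (1::'a) 1 = s + [:-a:]"
      by (simp add: s_def poly_eq_iff coeff_pCons coeff_monom split: nat.split)
    then have "monom 1 k = (s + [:-a:]) ^ k" by (metis monom_power mult_1 power_one)
    also have "... = (\<Sum>j\<le>k. of_nat (k choose j) * s ^ j * [:-a:] ^ (k - j))" by (rule binomial_ring)
    also have "... = (\<Sum>j\<le>k. smult (of_nat (k choose j) * (-a) ^ (k - j)) (s ^ j))"
      by (rule sum.cong) (simp_all add: poly_const_pow of_nat_poly mult.commute)
    finally show ?thesis .
  qed
  have sj: "s ^ j = s ^ (j mod (q + 1)) * (s ^ (q + 1)) ^ (j div (q + 1))" for j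
  proof -
    have "s ^ j = s ^ (j mod (q + 1) + (q + 1) * (j div (q + 1)))" by (simp only: mod_mult_div_eq)
    then show ?thesis by (simp only: power_add power_mult)
  qed
  have dv: "P dvd (monom 1 k - Q)"
  proof -
    have "monom 1 k - Q = (\<Sum>j\<le>k. smult (of_nat (k choose j) * (-a) ^ (k - j))
        (s ^ (j mod (q + 1)) * ((s ^ (q + 1)) ^ (j div (q + 1)) - [:g:] ^ (j div (q + 1)))))"
      unfolding tk Q_def sum_subtractf[symmetric]
    proof (rule sum.cong)
      fix j assume "j \<in> {..k}"
      show "smult (of_nat (k choose j) * (-a) ^ (k - j)) (s ^ j) - T j =
        smult (of_nat (k choose j) * (-a) ^ (k - j))
        (s ^ (j mod (q + 1)) * ((s ^ (q + 1)) ^ (j div (q + 1)) - [:g:] ^ (j div (q + 1))))"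
        unfolding T_def poly_const_pow
        by (subst sj[of j]) (simp add: right_diff_distrib smult_diff_right mult.commute)
    qed simp
    also have "P dvd ..."
    proof (rule dvd_sum)
      fix j
      have "P dvd ((s ^ (q + 1)) ^ (j div (q + 1)) - [:g:] ^ (j div (q + 1)))"
        unfolding PS by (rule diff_dvd_pow_diff)
      then show "P dvd smult (of_nat (k choose j) * (-a) ^ (k - j))
        (s ^ (j mod (q + 1)) * ((s ^ (q + 1)) ^ (j div (q + 1)) - [:g:] ^ (j div (q + 1))))"
        by (intro dvd_smult dvd_mult)
    qed
    finally show ?thesis .
  qed
  have degQ: "degree Q \<le> q - 1"
    unfolding Q_def
  proof (rule degree_sum_le)
    fix j assume j: "j \<in> {..k}"
    show "degree (T j) \<le> q - 1"
    proof (cases "j mod (q + 1) = q")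
      case True
      have "(of_nat (k choose j) :: 'a) = 0"
        using comb_zero[OF c assms(2,1,5,6,7,8)] j True by simp
      then show ?thesis by (simp add: T_def)
    next
      case False
      have "j mod (q + 1) < q + 1" by simp
      then have "j mod (q + 1) \<le> q - 1" using False by linarith
      moreover have "degree (T j) \<le> j mod (q + 1)"
        unfolding T_def s_def by (metis degree_smult_le degree_linear_power)
      ultimately show ?thesis by linarith
    qed
  qed simp
  have degP: "degree P = q + 1"
  proof -
    have "P = s ^ (q + 1) + (- [:g:])" using PS by simp
    moreover have ds: "degree (s ^ (q + 1)) = q + 1" unfolding s_def by (rule degree_linear_power)
    moreover have "degree (- [:g:]) < degree (s ^ (q + 1))" using ds by simp
    ultimately show ?thesis by (metis degree_add_eq_left)
  qed
  have "monom 1 k mod P = Q mod P" using dv by (simp add: mod_eq_dvd_iff)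
  also have "... = Q" using degQ degP by (intro mod_poly_less) linarith
  finally have "monom 1 k mod p_ab q \<alpha> \<beta> = Q" unfolding P_def .
  then show ?thesis using degQ qpos by simp
qed

end
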